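(* Let $X$ be a real Hilbert space and $T\colon X\to X$ averaged nonexpansive with $\operatorname{Fix}T\ne\varnothing$. Suppose that for every $\rho>0$ there exists $\theta<1$ such that for every $x$ with $\|x\|\le\rho$ there is $y\in\operatorname{Fix}T$ with $\langle x-y,Tx-y\rangle\le\theta\|x-y\|\,\|Tx-y\|$. Then $T$ is boundedly linearly regular; moreover, if $\theta$ can be chosen independently of $\rho$, then $T$ is linearly regular.
   Context: $T$ is averaged nonexpansive if $T=(1-\lambda)\mathrm{Id}+\lambda N$ with $\lambda\in[0,1[$ and $N$ nonexpansive. $T$ is linearly regular if there is $\kappa\ge0$ with $d_{\operatorname{Fix}T}(x)\le\kappa\|x-Tx\|$ for all $x\in X$; boundedly linearly regular if for each $\rho>0$ there is $\kappa\ge0$ with this inequality for all $\|x\|\le\rho$. *)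

theory Defs
  imports "HOL-Analysis.Analysis"
begin

definition nonexpansive :: "('a::real_normed_vector \<Rightarrow> 'a) \<Rightarrow> bool" where
  "nonexpansive N \<longleftrightarrow> (\<forall>x y. norm (N x - N y) \<le> norm (x - y))"

definition averaged_nonexpansive :: "('a::real_normed_vector \<Rightarrow> 'a) \<Rightarrow> bool" where
  "averaged_nonexpansive T \<longleftrightarrow>
     (\<exists>l N. 0 \<le> l \<and> l < 1 \<and> nonexpansive N \<and> (\<forall>x. T x = (1 - l) *\<^sub>R x + l *\<^sub>R N x))"

definition Fix :: "('a \<Rightarrow> 'a) \<Rightarrow> 'a set" where
  "Fix T = {x. T x = x}"

definition linearly_regular :: "('a::real_normed_vector \<Rightarrow> 'a) \<Rightarrow> bool" where
  "linearly_regular T \<longleftrightarrow> (\<exists>\<kappa>\<ge>0. \<forall>x. infdist x (Fix T) \<le> \<kappa> * norm (x - T x))"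

definition boundedly_linearly_regular :: "('a::real_normed_vector \<Rightarrow> 'a) \<Rightarrow> bool" where
  "boundedly_linearly_regular T \<longleftrightarrow>
     (\<forall>\<rho>>0. \<exists>\<kappa>\<ge>0. \<forall>x. norm x \<le> \<rho> \<longrightarrow> infdist x (Fix T) \<le> \<kappa> * norm (x - T x))"

end

theory Submission
  imports Defs
begin

lemma key_ineq:
  fixes a b :: "'a::real_inner"
  assumes h: "inner a b \<le> th * norm a * norm b" and t0: "0 \<le> t" and t1: "t < 1" and tt: "th \<le> t"
  shows "(1 - t) * norm a \<le> norm (a - b)"
proof -
  let ?A = "norm a" and ?B = "norm b"
  have AB: "0 \<le> ?A * ?B" by simp
  have h2: "inner a b \<le> t * ?A * ?B"
    using h mult_right_mono[OF tt AB] by (simp add: mult.assoc)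
  have "(norm (a - b))^2 = ?A^2 - 2 * inner a b + ?B^2"
    by (simp add: power2_norm_eq_inner inner_diff_left inner_diff_right inner_commute)
  also have "\<dots> \<ge> ?A^2 - 2 * t * ?A * ?B + ?B^2" using h2 by simp
  finally have 1: "(norm (a - b))^2 \<ge> ?A^2 - 2 * t * ?A * ?B + ?B^2" .
  have "?A^2 - 2 * t * ?A * ?B + ?B^2 - ((1 - t) * ?A)^2 = (?B - t*?A)^2 + (2*t - 2*t^2) * ?A^2"
    by (simp add: power2_eq_square algebra_simps)
  moreover have "(2*t - 2*t^2) * ?A^2 \<ge> 0"
    using t0 t1 by (intro mult_nonneg_nonneg) (auto simp: power2_eq_square mult_right_le_one_le)
  ultimately have "((1 - t) * ?A)^2 \<le> (norm (a - b))^2" using 1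
    by (smt (verit) zero_le_power2)
  thus ?thesis by (rule power2_le_imp_le) simp
qed

lemma reg_bound:
  fixes T :: "'a::real_inner \<Rightarrow> 'a"
  assumes "th < 1" and "y \<in> Fix T" and "inner (x - y) (T x - y) \<le> th * norm (x - y) * norm (T x - y)"
  shows "infdist x (Fix T) \<le> (1 / (1 - max th 0)) * norm (x - T x)"
proof -
  let ?t = "max th 0"
  have "(1 - ?t) * norm (x - y) \<le> norm ((x - y) - (T x - y))"
    by (rule key_ineq[OF assms(3)]) (use assms(1) in auto)
  hence "norm (x - y) \<le> (1 / (1 - ?t)) * norm (x - T x)"
    using assms(1) by (simp add: field_simps)
  moreover have "infdist x (Fix T) \<le> dist x y" using assms(2) by (rule infdist_le)
  ultimately show ?thesis by (simp add: dist_norm)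
qed

theorem lemma3p5:
  fixes T :: "'a::{real_inner, complete_space} \<Rightarrow> 'a"
  assumes "averaged_nonexpansive T"
    and "Fix T \<noteq> {}"
    and "\<forall>\<rho>>0. \<exists>\<theta><1. \<forall>x. norm x \<le> \<rho> \<longrightarrow>
            (\<exists>y\<in>Fix T. inner (x - y) (T x - y) \<le> \<theta> * norm (x - y) * norm (T x - y))"
  shows "boundedly_linearly_regular T \<and>
         ((\<exists>\<theta><1. \<forall>x. \<exists>y\<in>Fix T. inner (x - y) (T x - y) \<le> \<theta> * norm (x - y) * norm (T x - y))
            \<longrightarrow> linearly_regular T)"
proof
  show "boundedly_linearly_regular T"
    unfolding boundedly_linearly_regular_def
  proof (intro allI impI)
    fix \<rho> :: real assume "\<rho> > 0"
    then obtain th where th: "th < 1" and H: "\<forall>x. norm x \<le> \<rho> \<longrightarrow>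
            (\<exists>y\<in>Fix T. inner (x - y) (T x - y) \<le> th * norm (x - y) * norm (T x - y))"
      using assms(3) by blast
    show "\<exists>\<kappa>\<ge>0. \<forall>x. norm x \<le> \<rho> \<longrightarrow> infdist x (Fix T) \<le> \<kappa> * norm (x - T x)"
    proof (intro exI[of _ "1 / (1 - max th 0)"] conjI allI impI)
      show "0 \<le> 1 / (1 - max th 0)" using th by simp
      fix x :: 'a assume "norm x \<le> \<rho>"
      with H obtain y where "y \<in> Fix T" "inner (x - y) (T x - y) \<le> th * norm (x - y) * norm (T x - y)"
        by blast
      thus "infdist x (Fix T) \<le> 1 / (1 - max th 0) * norm (x - T x)"
        using reg_bound th by blast
    qed
  qed
next
  show "(\<exists>\<theta><1. \<forall>x. \<exists>y\<in>Fix T. inner (x - y) (T x - y) \<le> \<theta> * norm (x - y) * norm (T x - y))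
            \<longrightarrow> linearly_regular T"
  proof
    assume "\<exists>\<theta><1. \<forall>x. \<exists>y\<in>Fix T. inner (x - y) (T x - y) \<le> \<theta> * norm (x - y) * norm (T x - y)"
    then obtain th where th: "th < 1" and H: "\<forall>x. \<exists>y\<in>Fix T. inner (x - y) (T x - y) \<le> th * norm (x - y) * norm (T x - y)"
      by blast
    show "linearly_regular T" unfolding linearly_regular_def
    proof (intro exI[of _ "1 / (1 - max th 0)"] conjI allI)
      show "0 \<le> 1 / (1 - max th 0)" using th by simp
      fix x :: 'a
      from H obtain y where "y \<in> Fix T" "inner (x - y) (T x - y) \<le> th * norm (x - y) * norm (T x - y)"
        by blast
      thus "infdist x (Fix T) \<le> 1 / (1 - max th 0) * norm (x - T x)"
        using reg_bound th by blast
    qed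
  qed
qed

end
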